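(* Let $G$ be the corresponding graph of an array $A$ with reach one, let $F$ be a resulting DFS forest of $G$, and let $T$ be a component of $F$ whose root $v$ has exactly two children $a_1,b_1$ (i.e. $T$ has two sub-trees stemming from the root). Apply the sub-tree merge to $T$ and let $H$ be $T$ together with all arcs added. Then $H$ contains a directed Hamiltonian path, i.e. a directed path visiting every vertex of $T$ exactly once.
   Context: An array is a finite sequence $A=(A[1],\dots,A[n])$ of pairwise distinct real numbers. The corresponding graph of $A$ with reach one is the directed graph on $\{1,\dots,n\}$ with an arc $(i,j)$ whenever $j\equiv i\pm1\pmod n$, $j\ne i$, and $A[i]<A[j]$. DFS is run with adjacency lists sorted in increasing $A$-value and a visiting list containing all vertices; the resulting DFS forest consists of the arcs $(\mathrm{parent}(w),w)$ along which DFS discovers vertices, and its components (of the underlying undirected graph) are rooted trees. Sub-tree merge of $T$: set $p=a_1$, $q=b_1$; while both $p,q$ are defined: if $A[p]<A[q]$, add the arc $(p,q)$ and replace $p$ by its smallest-valued child in $F$ (undefined if it has none); otherwise add the arc $(q,p)$ and replace $q$ by its smallest-valued child in $F$ (undefined if none). *)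

theory Defs
  imports Complex_Main
begin

text \<open>Vertices are 0,...,n-1 (the paper's 1,...,n shifted by one); the array is
  A :: nat => real, pairwise distinct on {0..<n}.\<close>

definition ra_arc :: "(nat \<Rightarrow> real) \<Rightarrow> nat \<Rightarrow> nat \<Rightarrow> nat \<Rightarrow> bool" where
  "ra_arc A n i j \<longleftrightarrow> i < n \<and> j < n \<and> j \<noteq> i \<and>
      (j = (i + 1) mod n \<or> i = (j + 1) mod n) \<and> A i < A j"

definition out_nbrs :: "(nat \<Rightarrow> real) \<Rightarrow> nat \<Rightarrow> nat \<Rightarrow> nat list" where
  "out_nbrs A n u = sort_key A (filter (\<lambda>j. ra_arc A n u j) [0..<n])"

text \<open>DFS as a state machine: (remaining visiting list, stack of frames
  (vertex, unexplored adjacency entries), visited set, parent map).\<close>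
type_synonym dfs_state = "nat list \<times> (nat \<times> nat list) list \<times> nat set \<times> (nat \<Rightarrow> nat option)"

fun dfs_step :: "(nat \<Rightarrow> real) \<Rightarrow> nat \<Rightarrow> dfs_state \<Rightarrow> dfs_state" where
  "dfs_step A n ([], [], vis, par) = ([], [], vis, par)"
| "dfs_step A n (r # L, [], vis, par) =
     (if r \<in> vis then (L, [], vis, par)
      else (L, [(r, out_nbrs A n r)], insert r vis, par))"
| "dfs_step A n (L, (u, []) # st, vis, par) = (L, st, vis, par)"
| "dfs_step A n (L, (u, w # ws) # st, vis, par) =
     (if w \<in> vis then (L, (u, ws) # st, vis, par)
      else (L, (w, out_nbrs A n w) # (u, ws) # st, insert w vis, par(w := Some u)))"

text \<open>The DFS run to completion (4n steps always suffice: n list entries,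
  at most 2n adjacency entries, at most n pops; afterwards the step is the identity).\<close>
definition dfs_parent :: "(nat \<Rightarrow> real) \<Rightarrow> nat \<Rightarrow> nat list \<Rightarrow> (nat \<Rightarrow> nat option)" where
  "dfs_parent A n L = snd (snd (snd ((dfs_step A n ^^ (4 * n + 4)) (L, [], {}, (\<lambda>_. None)))))"

definition forest_arcs :: "(nat \<Rightarrow> nat option) \<Rightarrow> (nat \<times> nat) set" where
  "forest_arcs par = {(u, w). par w = Some u}"

definition tree_verts :: "(nat \<Rightarrow> nat option) \<Rightarrow> nat \<Rightarrow> nat set" where
  "tree_verts par v = {w. (v, w) \<in> (forest_arcs par)\<^sup>*}"

definition children :: "(nat \<Rightarrow> nat option) \<Rightarrow> nat \<Rightarrow> nat set" where
  "children par u = {w. par w = Some u}"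

definition min_child :: "(nat \<Rightarrow> real) \<Rightarrow> (nat \<Rightarrow> nat option) \<Rightarrow> nat \<Rightarrow> nat option" where
  "min_child A par u =
     (if children par u = {} then None
      else Some (THE c. c \<in> children par u \<and> (\<forall>d \<in> children par u. A c \<le> A d)))"

text \<open>The arcs added by the sub-tree merge loop, with a step budget k
  (the loop runs at most n times, as each step moves to a new vertex).\<close>
fun merge_arcs :: "nat \<Rightarrow> (nat \<Rightarrow> real) \<Rightarrow> (nat \<Rightarrow> nat option) \<Rightarrow> nat option \<Rightarrow> nat option \<Rightarrow> (nat \<times> nat) set" where
  "merge_arcs (Suc k) A par (Some p) (Some q) =
     (if A p < A q then insert (p, q) (merge_arcs k A par (min_child A par p) (Some q))
      else insert (q, p) (merge_arcs k A par (Some p) (min_child A par q)))"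
| "merge_arcs _ A par _ _ = {}"

definition subtree_merge :: "nat \<Rightarrow> (nat \<Rightarrow> real) \<Rightarrow> (nat \<Rightarrow> nat option) \<Rightarrow> nat \<Rightarrow> nat \<Rightarrow> (nat \<times> nat) set" where
  "subtree_merge n A par a1 b1 = merge_arcs n A par (Some a1) (Some b1)"

definition ham_path :: "nat set \<Rightarrow> (nat \<times> nat) set \<Rightarrow> nat list \<Rightarrow> bool" where
  "ham_path V E xs \<longleftrightarrow> distinct xs \<and> set xs = V \<and>
      (\<forall>i. i + 1 < length xs \<longrightarrow> (xs ! i, xs ! (i + 1)) \<in> E)"

end

theory Submission
  imports Defs
begin

definition okp :: "(nat \<Rightarrow> real) \<Rightarrow> nat \<Rightarrow> (nat \<Rightarrow> nat option) \<Rightarrow> bool" where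
  "okp A n par \<longleftrightarrow> (\<forall>w u. par w = Some u \<longrightarrow> ra_arc A n u w)"

definition dinv :: "(nat \<Rightarrow> real) \<Rightarrow> nat \<Rightarrow> dfs_state \<Rightarrow> bool" where
  "dinv A n s \<longleftrightarrow> (\<forall>f\<in>set (fst (snd s)). \<forall>j\<in>set (snd f). ra_arc A n (fst f) j)
      \<and> okp A n (snd (snd (snd s)))"

lemma dinv_step: "dinv A n s \<Longrightarrow> dinv A n (dfs_step A n s)"
  by (induction A n s rule: dfs_step.induct) (auto simp: dinv_def okp_def out_nbrs_def)

lemma dinv_pow: "dinv A n s \<Longrightarrow> dinv A n ((dfs_step A n ^^ k) s)"
  by (induction k) (auto simp: dinv_step)

lemma okp_dfs: "okp A n (dfs_parent A n L)"
proof -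
  have "dinv A n (L, [], {}, (\<lambda>_. None))" by (simp add: dinv_def okp_def)
  from dinv_pow[OF this, of "4*n+4"] show ?thesis
    by (simp add: dinv_def dfs_parent_def)
qed

fun lpath :: "(nat \<times> nat) set \<Rightarrow> nat list \<Rightarrow> bool" where
  "lpath E [] = True" | "lpath E [x] = True" | "lpath E (x # y # xs) = ((x, y) \<in> E \<and> lpath E (y # xs))"

lemma lpath_nth: "lpath E xs = (\<forall>i. i + 1 < length xs \<longrightarrow> (xs ! i, xs ! (i + 1)) \<in> E)"
proof (induction E xs rule: lpath.induct)
  case (3 E x y xs)
  show ?case
  proof
    assume "lpath E (x # y # xs)"
    then show "\<forall>i. i + 1 < length (x # y # xs) \<longrightarrow> ((x # y # xs) ! i, (x # y # xs) ! (i + 1)) \<in> E"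
      using 3 by (auto simp: nth_Cons split: nat.splits)
  next
    assume H: "\<forall>i. i + 1 < length (x # y # xs) \<longrightarrow> ((x # y # xs) ! i, (x # y # xs) ! (i + 1)) \<in> E"
    have "(x, y) \<in> E" using H[rule_format, of 0] by simp
    moreover have "\<forall>i. i + 1 < length (y # xs) \<longrightarrow> ((y # xs) ! i, (y # xs) ! (i + 1)) \<in> E"
      using H[rule_format, of "Suc _"] by simp
    ultimately show "lpath E (x # y # xs)" using 3 by simp
  qed
qed auto

lemma lpath_mono: "lpath E xs \<Longrightarrow> E \<subseteq> E' \<Longrightarrow> lpath E' xs"
  by (induction E xs rule: lpath.induct) auto

lemma lpath_Cons: "lpath E (x # xs) \<longleftrightarrow> (xs = [] \<or> (x, hd xs) \<in> E) \<and> lpath E xs"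
  by (cases xs) auto

fun chainp :: "(nat \<Rightarrow> real) \<Rightarrow> (nat \<Rightarrow> nat option) \<Rightarrow> nat list \<Rightarrow> bool" where
  "chainp A par [] = True"
| "chainp A par (x # xs) = (min_child A par x = (case xs of [] \<Rightarrow> None | y # _ \<Rightarrow> Some y) \<and> chainp A par xs)"

lemma merge:
  "\<lbrakk>chainp A par P; chainp A par Q; P \<noteq> []; Q \<noteq> []; length P + length Q \<le> k; lpath E P; lpath E Q\<rbrakk>
   \<Longrightarrow> \<exists>M. M \<noteq> [] \<and> hd M \<in> {hd P, hd Q} \<and> set M = set P \<union> set Q \<and> length M = length P + length Q
        \<and> lpath (E \<union> merge_arcs k A par (Some (hd P)) (Some (hd Q))) M"
proof (induction k arbitrary: P Q)
  case 0
  then show ?case by simp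
next
  case (Suc k)
  obtain p P' where P: "P = p # P'" using Suc.prems by (cases P) auto
  obtain q Q' where Q: "Q = q # Q'" using Suc.prems by (cases Q) auto
  show ?case
  proof (cases "A p < A q")
    case True
    show ?thesis
    proof (cases P')
      case Nil
      then have mc: "min_child A par p = None" using Suc.prems P by simp
      show ?thesis
        apply (rule exI[of _ "p # Q"])
        using Suc.prems P Q Nil True mc
        by (auto simp: lpath_Cons intro: lpath_mono)
    next
      case (Cons p2 P'')
      then have mc: "min_child A par p = Some p2" using Suc.prems P by simp
      have "\<exists>M. M \<noteq> [] \<and> hd M \<in> {hd P', hd Q} \<and> set M = set P' \<union> set Q \<and> length M = length P' + length Q
        \<and> lpath (E \<union> merge_arcs k A par (Some (hd P')) (Some (hd Q))) M"
        apply (rule Suc.IH)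
        using Suc.prems P Cons by (auto simp: lpath_Cons)
      then obtain M where M: "M \<noteq> []" "hd M \<in> {p2, q}" "set M = set P' \<union> set Q" "length M = length P' + length Q"
        "lpath (E \<union> merge_arcs k A par (Some p2) (Some q)) M" using Cons Q by auto
      have pp2: "(p, p2) \<in> E" using Suc.prems(6) P Cons by simp
      show ?thesis
        apply (rule exI[of _ "p # M"])
        using M P Q True mc pp2 by (auto simp: lpath_Cons intro: lpath_mono)
    qed
  next
    case False
    show ?thesis
    proof (cases Q')
      case Nil
      then have mc: "min_child A par q = None" using Suc.prems Q by simp
      show ?thesis
        apply (rule exI[of _ "q # P"])
        using Suc.prems P Q Nil False mc
        by (auto simp: lpath_Cons intro: lpath_mono)
    next
      case (Cons q2 Q'')
      then have mc: "min_child A par q = Some q2" using Suc.prems Q by simp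
      have "\<exists>M. M \<noteq> [] \<and> hd M \<in> {hd P, hd Q'} \<and> set M = set P \<union> set Q' \<and> length M = length P + length Q'
        \<and> lpath (E \<union> merge_arcs k A par (Some (hd P)) (Some (hd Q'))) M"
        apply (rule Suc.IH)
        using Suc.prems Q Cons by (auto simp: lpath_Cons)
      then obtain M where M: "M \<noteq> []" "hd M \<in> {p, q2}" "set M = set P \<union> set Q'" "length M = length P + length Q'"
        "lpath (E \<union> merge_arcs k A par (Some p) (Some q2)) M" using Cons P by auto
      have qq2: "(q, q2) \<in> E" using Suc.prems(7) Q Cons by simp
      show ?thesis
        apply (rule exI[of _ "q # M"])
        using M P Q False mc qq2 by (auto simp: lpath_Cons intro: lpath_mono)
    qed
  qed
qed

lemma nbr0: "(x::nat) < n \<Longrightarrow> j < n \<Longrightarrow> j = (x + 1) mod n \<or> x = (j + 1) mod n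
   \<Longrightarrow> j = (x + 1) mod n \<or> j = (x + n - 1) mod n"
proof -
  assume h: "x < n" "j < n" "j = (x + 1) mod n \<or> x = (j + 1) mod n"
  show ?thesis
  proof (cases "j = (x + 1) mod n")
    case False
    then have "x = (j + 1) mod n" using h by auto
    show ?thesis
    proof (cases "j + 1 < n")
      case True
      have "(j + 1) mod n = j + 1" using True by (rule mod_less)
      then have "x = j + 1" using \<open>x = (j + 1) mod n\<close> by simp
      then have "x + n - 1 = j + n" by simp
      then have "(x + n - 1) mod n = j" using h(2) by simp
      then show ?thesis by simp
    next
      case False
      then have "j + 1 = n" using h by simp
      then have "x = 0" using \<open>x = (j + 1) mod n\<close> by simp
      then show ?thesis using \<open>j + 1 = n\<close> by (auto simp: mod_less)
    qed
  qed simp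
qed

lemma nbr: "ra_arc A n x j \<Longrightarrow> j = (x + 1) mod n \<or> j = (x + n - 1) mod n"
  by (rule nbr0) (auto simp: ra_arc_def)

lemma nbr': "ra_arc A n j x \<Longrightarrow> j = (x + 1) mod n \<or> j = (x + n - 1) mod n"
  by (rule nbr0) (auto simp: ra_arc_def)

context
  fixes A :: "nat \<Rightarrow> real" and n :: nat and par :: "nat \<Rightarrow> nat option"
  assumes ok: "okp A n par"
begin

abbreviation "R \<equiv> forest_arcs par"
abbreviation "D x \<equiv> {w. (x, w) \<in> R\<^sup>*}"

lemma arc: "(u, w) \<in> R \<Longrightarrow> ra_arc A n u w"
  using ok by (auto simp: okp_def forest_arcs_def)

lemma arcA: "(u, w) \<in> R \<Longrightarrow> A u < A w"
  using arc by (auto simp: ra_arc_def)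

lemma monoA: "(x, w) \<in> R\<^sup>* \<Longrightarrow> A x \<le> A w"
  by (induction rule: rtrancl_induct) (auto dest: arcA)

lemma D_sub: "D x \<subseteq> insert x {0..<n}"
proof
  fix w assume "w \<in> D x"
  then have "(x, w) \<in> R\<^sup>*" by simp
  then show "w \<in> insert x {0..<n}"
    by (cases rule: rtranclE) (auto dest!: arc simp: ra_arc_def)
qed

lemma finD: "finite (D x)"
  using D_sub finite_subset by blast

lemma one_child:
  assumes "par x = Some u" "c \<in> children par x" "d \<in> children par x"
  shows "c = d"
proof -
  have a1: "ra_arc A n u x" "ra_arc A n x c" "ra_arc A n x d"
    using ok assms by (auto simp: okp_def children_def)
  have "A u < A x" "A x < A c" "A x < A d" using a1 by (simp_all add: ra_arc_def)
  then have ne: "u \<noteq> c" "u \<noteq> d" by auto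
  obtain s1 s2 where "c = s1 \<or> c = s2" "d = s1 \<or> d = s2" "u = s1 \<or> u = s2"
    using nbr[OF a1(2)] nbr[OF a1(3)] nbr'[OF a1(1)] by blast
  with ne show ?thesis by blast
qed

lemma mc_single: "children par x = {c} \<Longrightarrow> min_child A par x = Some c"
  unfolding min_child_def by (simp, rule the_equality) auto

lemma mc_par: "par x \<noteq> None \<Longrightarrow> min_child A par x = Some y \<Longrightarrow> par y = Some x"
proof -
  assume "par x \<noteq> None" "min_child A par x = Some y"
  then obtain u where u: "par x = Some u" and ne: "children par x \<noteq> {}"
    by (auto simp: min_child_def split: if_splits)
  then obtain c where c: "c \<in> children par x" by blast
  then have "children par x = {c}" using one_child[OF u] by blast
  with \<open>min_child A par x = Some y\<close> have "y = c" using mc_single by simp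
  with c show ?thesis by (simp add: children_def)
qed

lemma chain_ex: "par x \<noteq> None \<Longrightarrow>
  \<exists>P. P \<noteq> [] \<and> hd P = x \<and> chainp A par P \<and> distinct P \<and> set P = D x"
proof (induction "card (D x)" arbitrary: x rule: less_induct)
  case less
  then obtain u where u: "par x = Some u" by auto
  show ?case
  proof (cases "children par x = {}")
    case True
    have "D x = {x}"
    proof (safe)
      fix w assume "(x, w) \<in> R\<^sup>*"
      then show "w = x"
        by (cases rule: converse_rtranclE) (use True in \<open>auto simp: forest_arcs_def children_def\<close>)
    qed
    moreover have "min_child A par x = None" using True by (simp add: min_child_def)
    ultimately show ?thesis by (intro exI[of _ "[x]"]) auto
  next
    case False
    then obtain c where c: "c \<in> children par x" by blast
    then have ch: "children par x = {c}" using one_child[OF u] by blast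
    then have mc: "min_child A par x = Some c" by (rule mc_single)
    have xc: "(x, c) \<in> R" using c by (simp add: children_def forest_arcs_def)
    have Dx: "D x = insert x (D c)"
    proof (safe)
      fix w assume "(x, w) \<in> R\<^sup>*" "w \<noteq> x"
      then show "(c, w) \<in> R\<^sup>*"
        by (cases rule: converse_rtranclE) (use ch in \<open>auto simp: forest_arcs_def children_def\<close>)
    next
      fix w assume "(c, w) \<in> R\<^sup>*"
      then show "(x, w) \<in> R\<^sup>*" using xc by (rule converse_rtrancl_into_rtrancl[rotated])
    qed
    have xn: "x \<notin> D c" using monoA arcA[OF xc] by fastforce
    have "card (D c) < card (D x)"
      using Dx xn finD by (simp add: card_insert_if)
    moreover have "par c \<noteq> None" using c by (simp add: children_def)
    ultimately obtain Pc where Pc: "Pc \<noteq> []" "hd Pc = c" "chainp A par Pc" "distinct Pc" "set Pc = D c"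
      using less by blast
    show ?thesis
      apply (rule exI[of _ "x # Pc"])
      using Pc mc Dx xn by (cases Pc) auto
  qed
qed

lemma lastE: "(y, w) \<in> R\<^sup>* \<Longrightarrow> w \<noteq> y \<Longrightarrow> \<exists>u. par w = Some u \<and> (y, u) \<in> R\<^sup>*"
  by (erule rtranclE) (auto simp: forest_arcs_def)

lemma disj:
  assumes px: "par x = Some v" and py: "par y = Some v" and xy: "x \<noteq> y"
  and w: "(x, w) \<in> R\<^sup>*"
  shows "(y, w) \<notin> R\<^sup>*"
  using w
proof (induction rule: rtrancl_induct)
  case base
  show ?case
  proof
    assume "(y, x) \<in> R\<^sup>*"
    with lastE[OF this] xy px obtain "(y, v) \<in> R\<^sup>*" by auto
    with monoA arcA[of v y] py show False by (force simp: forest_arcs_def)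
  qed
next
  case (step u w)
  show ?case
  proof
    assume yw: "(y, w) \<in> R\<^sup>*"
    have pw: "par w = Some u" using step(2) by (simp add: forest_arcs_def)
    show False
    proof (cases "w = y")
      case True
      then have "u = v" using pw py by simp
      with step(1) have "(x, v) \<in> R\<^sup>*" by simp
      with monoA arcA[of v x] px show False by (force simp: forest_arcs_def)
    next
      case False
      with lastE[OF yw] pw have "(y, u) \<in> R\<^sup>*" by auto
      with step(3) show False by simp
    qed
  qed
qed

lemma has_par: "(x, w) \<in> R\<^sup>* \<Longrightarrow> par x \<noteq> None \<Longrightarrow> par w \<noteq> None"
  by (erule rtranclE) (auto simp: forest_arcs_def)

lemma chain_lpath: "chainp A par P \<Longrightarrow> (\<forall>x\<in>set P. par x \<noteq> None) \<Longrightarrow> set P \<subseteq> T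
   \<Longrightarrow> lpath {(u, w) \<in> R. w \<in> T} P"
proof (induction P)
  case (Cons x xs)
  show ?case
  proof (cases xs)
    case (Cons y ys)
    have m: "min_child A par x = Some y" using Cons.prems(1) \<open>xs = y # ys\<close> by simp
    have "par x \<noteq> None" using Cons.prems(2) by simp
    from mc_par[OF this m] have "par y = Some x" .
    moreover have "lpath {(u, w) \<in> R. w \<in> T} xs" using Cons.prems Cons.IH by simp
    moreover have "y \<in> T" using Cons.prems(3) \<open>xs = y # ys\<close> by simp
    ultimately show ?thesis using \<open>xs = y # ys\<close> by (simp add: forest_arcs_def)
  qed simp
qed simp

end

theorem theorem9:
  fixes A :: "nat \<Rightarrow> real" and n :: nat and L :: "nat list" and v a1 b1 :: nat
  assumes "inj_on A {0..<n}"
    and "distinct L" and "set L = {0..<n}"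
    and "v < n" and "dfs_parent A n L v = None"
    and "a1 \<noteq> b1" and "children (dfs_parent A n L) v = {a1, b1}"
  shows "\<exists>xs. ham_path (tree_verts (dfs_parent A n L) v)
           ({(u, w) \<in> forest_arcs (dfs_parent A n L). w \<in> tree_verts (dfs_parent A n L) v}
              \<union> subtree_merge n A (dfs_parent A n L) a1 b1) xs"
proof -
  define par where "par = dfs_parent A n L"
  have ok: "okp A n par" unfolding par_def by (rule okp_dfs)
  define R where "R = forest_arcs par"
  define T where "T = tree_verts par v"
  have ch: "children par v = {a1, b1}" using assms(7) par_def by simp
  have pa: "par a1 = Some v" and pb: "par b1 = Some v" using ch by (auto simp: children_def)
  have Ra: "(v, a1) \<in> R" and Rb: "(v, b1) \<in> R" using pa pb by (auto simp: R_def forest_arcs_def)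
  obtain Pa where Pa: "Pa \<noteq> []" "hd Pa = a1" "chainp A par Pa" "distinct Pa" "set Pa = {w. (a1, w) \<in> R\<^sup>*}"
    using chain_ex[OF ok, of a1] pa R_def by auto
  obtain Pb where Pb: "Pb \<noteq> []" "hd Pb = b1" "chainp A par Pb" "distinct Pb" "set Pb = {w. (b1, w) \<in> R\<^sup>*}"
    using chain_ex[OF ok, of b1] pb R_def by auto
  have TD: "T = insert v (set Pa \<union> set Pb)"
  proof (safe)
    fix w assume "w \<in> T" "w \<noteq> v" "w \<notin> set Pb"
    then have "(v, w) \<in> R\<^sup>*" by (simp add: T_def tree_verts_def R_def)
    then show "w \<in> set Pa"
      apply (cases rule: converse_rtranclE)
      using \<open>w \<noteq> v\<close> \<open>w \<notin> set Pb\<close> ch Pa(5) Pb(5)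
      by (auto simp: R_def forest_arcs_def children_def)
  next
    show "v \<in> T" by (simp add: T_def tree_verts_def)
  next
    fix w assume "w \<in> set Pa"
    then have "(a1, w) \<in> R\<^sup>*" using Pa by simp
    then show "w \<in> T" using Ra unfolding T_def tree_verts_def R_def
      by (auto intro: converse_rtrancl_into_rtrancl)
  next
    fix w assume "w \<in> set Pb"
    then have "(b1, w) \<in> R\<^sup>*" using Pb by simp
    then show "w \<in> T" using Rb unfolding T_def tree_verts_def R_def
      by (auto intro: converse_rtrancl_into_rtrancl)
  qed
  have dj: "set Pa \<inter> set Pb = {}"
    using disj[OF ok pa pb assms(6)] Pa(5) Pb(5) R_def by auto
  have va: "v \<notin> set Pa"
  proof
    assume "v \<in> set Pa"
    then have "(a1, v) \<in> R\<^sup>*" using Pa by simp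
    with monoA[OF ok] arcA[OF ok] Ra R_def show False by fastforce
  qed
  have vb: "v \<notin> set Pb"
  proof
    assume "v \<in> set Pb"
    then have "(b1, v) \<in> R\<^sup>*" using Pb by simp
    with monoA[OF ok] arcA[OF ok] Rb R_def show False by fastforce
  qed
  have a1n: "a1 < n" and b1n: "b1 < n" using arc[OF ok] Ra Rb R_def by (auto simp: ra_arc_def)
  have sub: "insert v (set Pa \<union> set Pb) \<subseteq> {0..<n}"
    using D_sub[OF ok, of a1] D_sub[OF ok, of b1] Pa(5) Pb(5) a1n b1n assms(4) R_def by auto
  have "card (insert v (set Pa \<union> set Pb)) = Suc (length Pa + length Pb)"
    using va vb dj Pa(4) Pb(4) by (simp add: card_Un_disjoint distinct_card)
  moreover have "card (insert v (set Pa \<union> set Pb)) \<le> n"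
    using card_mono[OF _ sub] by simp
  ultimately have len: "length Pa + length Pb \<le> n" by simp
  define E0 where "E0 = {(u, w) \<in> R. w \<in> T}"
  have parA: "\<forall>x\<in>set Pa. par x \<noteq> None" using has_par[OF ok] Pa(5) pa R_def by auto
  have parB: "\<forall>x\<in>set Pb. par x \<noteq> None" using has_par[OF ok] Pb(5) pb R_def by auto
  have lA: "lpath E0 Pa" unfolding E0_def R_def
    by (rule chain_lpath[OF ok Pa(3) parA]) (use TD in auto)
  have lB: "lpath E0 Pb" unfolding E0_def R_def
    by (rule chain_lpath[OF ok Pb(3) parB]) (use TD in auto)
  obtain M where M: "M \<noteq> []" "hd M \<in> {a1, b1}" "set M = set Pa \<union> set Pb"
    "length M = length Pa + length Pb" "lpath (E0 \<union> merge_arcs n A par (Some a1) (Some b1)) M"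
    using merge[OF Pa(3) Pb(3) Pa(1) Pb(1) len lA lB] Pa(2) Pb(2) by auto
  have dM: "distinct M"
    using M(3,4) dj Pa(4) Pb(4) by (simp add: card_distinct card_Un_disjoint distinct_card)
  have vhd: "(v, hd M) \<in> E0" using M(2) Ra Rb TD M(1) M(3) Pa Pb hd_in_set[OF M(1)]
    unfolding E0_def by auto
  have "lpath (E0 \<union> merge_arcs n A par (Some a1) (Some b1)) (v # M)"
    using M(1,5) vhd by (simp add: lpath_Cons)
  moreover have "distinct (v # M)" using dM M(3) va vb by simp
  moreover have "set (v # M) = T" using TD M(3) by simp
  ultimately show ?thesis
    unfolding ham_path_def lpath_nth[symmetric] E0_def R_def T_def par_def subtree_merge_def
    by blast
qed

end
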